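(* Let $(A,B)$ be a regular pair with $A,B\in\mathbb{C}^{n\times n}$, and let $C,D\in\mathbb{C}^{n\times n}$ be such that $[C,D]\in\mathbb{C}^{n\times2n}$ has full row rank and $CA+DB=0$. Then the pair $(D,C)$ is regular.
   Context: A pair $(A,B)$ of square matrices is regular if $\det(A-\lambda B)\neq0$ for some $\lambda\in\mathbb{C}$. *)

theory Defs
  imports "HOL-Analysis.Analysis"
begin

definition regular_pair :: "complex^'n^'n \<Rightarrow> complex^'n^'n \<Rightarrow> bool" where
  "regular_pair A B \<longleftrightarrow> (\<exists>z::complex. det (A - (\<chi> i j. z * B $ i $ j)) \<noteq> 0)"

definition hcat :: "'a^'m^'r \<Rightarrow> 'a^'n^'r \<Rightarrow> 'a^('m + 'n)^'r" where
  "hcat C D = (\<chi> i j. case j of Inl k \<Rightarrow> C $ i $ k | Inr k \<Rightarrow> D $ i $ k)"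

end

theory Submission imports Defs begin

lemma vm_sum: "(y v* (M::'a::field^'c^'r)) = (\<Sum>i\<in>UNIV. y$i *s row i M)"
  by (simp add: vec_eq_iff vector_matrix_mult_def row_def sum_component mult.commute)

lemma rank_full_left_ker:
  fixes M :: "'a::field^'c^'r"
  assumes r: "rank M = CARD('r)" and y: "y v* M = 0"
  shows "y = 0"
proof -
  let ?R = "rows M"
  have R: "?R = range (\<lambda>i. row i M)" by (auto simp: rows_def)
  have fin: "finite ?R" using R by simp
  have cardle: "card ?R \<le> CARD('r)" using R by (simp add: card_image_le)
  have dimle: "vec.dim ?R \<le> card ?R" using fin by (intro vec.dim_le_card) (auto intro: vec.span_base)
  have dimeq: "vec.dim ?R = CARD('r)" using r by (simp add: row_rank_def_gen)
  have ceq: "card ?R = vec.dim ?R" using cardle dimle dimeq by linarith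
  have ind: "vec.independent ?R"
    using vec.card_eq_dim[of ?R ?R] ceq fin by (auto intro: vec.span_base)
  have inj: "inj (\<lambda>i. row i M)"
    using ceq dimeq R by (simp add: inj_on_iff_eq_card[symmetric])
  define c where "c v = y $ (inv (\<lambda>i. row i M) v)" for v
  have "(\<Sum>v\<in>?R. c v *s v) = (\<Sum>i\<in>UNIV. c (row i M) *s row i M)"
    unfolding R by (subst sum.reindex[OF inj]) simp
  also have "\<dots> = (\<Sum>i\<in>UNIV. y$i *s row i M)"
    unfolding c_def using inv_f_f[OF inj] by simp
  also have "\<dots> = 0" using y vm_sum by metis
  finally have "\<forall>v\<in>?R. c v = 0" using ind vec.independent_explicit by blast
  then have "\<forall>i. y $ i = 0" unfolding c_def R using inv_f_f[OF inj] by (metis rangeI)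
  then show ?thesis by (simp add: vec_eq_iff)
qed

lemma det0_left_ker:
  fixes M :: "'a::field^'n^'n"
  shows "det M = 0 \<longleftrightarrow> (\<exists>y. y \<noteq> 0 \<and> y v* M = 0)"
proof -
  have "det M = 0 \<longleftrightarrow> \<not> invertible (transpose M)"
    by (simp add: invertible_det_nz det_transpose)
  also have "\<dots> \<longleftrightarrow> \<not> (\<exists>B. B ** transpose M = mat 1)"
    by (simp add: invertible_left_inverse)
  also have "\<dots> \<longleftrightarrow> (\<exists>y. y \<noteq> 0 \<and> y v* M = 0)"
    unfolding matrix_left_invertible_ker by auto
  finally show ?thesis .
qed

definition sm :: "'a::field \<Rightarrow> 'a^'n^'m \<Rightarrow> 'a^'n^'m" where
  "sm z B = (\<chi> i j. z * B $ i $ j)"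

lemma vm_smult: "y v* (sm c (M::'a::field^'n^'m)) = c *s (y v* M)"
  by (simp add: vec_eq_iff vector_matrix_mult_def sm_def sum_distrib_left algebra_simps)

lemma vm_neg: "y v* (- (M::'a::field^'n^'m)) = - (y v* M)"
  by (simp add: vec_eq_iff vector_matrix_mult_def sum_negf)

lemma vm_scal_left: "(c *s y) v* (M::'a::field^'n^'m) = c *s (y v* M)"
  by (simp add: vec_eq_iff vector_matrix_mult_def sum_distrib_left mult.assoc)

lemma vm_hcat: "y v* hcat C D = 0 \<longleftrightarrow> y v* C = 0 \<and> y v* D = 0"
proof -
  have e: "(y v* hcat C D) $ j = (case j of Inl k \<Rightarrow> (y v* C) $ k | Inr k \<Rightarrow> (y v* D) $ k)" for j
    by (cases j) (simp_all add: vector_matrix_mult_def hcat_def)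
  show ?thesis
  proof
    assume h: "y v* hcat C D = 0"
    show "y v* C = 0 \<and> y v* D = 0"
      using e[of "Inl _"] e[of "Inr _"] h by (simp add: vec_eq_iff)
  next
    assume h: "y v* C = 0 \<and> y v* D = 0"
    show "y v* hcat C D = 0"
      unfolding vec_eq_iff using e h by (simp split: sum.split)
  qed
qed

theorem lemma3p4:
  fixes A B C D :: "complex^'n^'n"
  assumes "regular_pair A B"
    and "rank (hcat C D) = CARD('n)"
    and "C ** A + D ** B = 0"
  shows "regular_pair D C"
proof -
  obtain w where w: "det (A - sm w B) \<noteq> 0"
    using assms(1) by (auto simp: regular_pair_def sm_def[symmetric])
  have "det (D - sm (-w) C) \<noteq> 0"
  proof
    assume "det (D - sm (-w) C) = 0"
    then obtain y where y0: "y \<noteq> 0" and yk: "y v* (D - sm (-w) C) = 0"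
      using det0_left_ker by blast
    define u where "u = y v* C"
    have yD: "y v* D = (-w) *s u"
    proof -
      have "y v* D - (-w) *s u = 0"
        using yk unfolding u_def vector_matrix_mult_diff_rdistrib vm_smult .
      then show ?thesis by (rule iffD2[OF eq_iff_diff_eq_0])
    qed
    show False
    proof (cases "u = 0")
      case True
      have c0: "y v* C = 0" using True u_def by simp
      have d0: "y v* D = 0" using yD True by simp
      have "y v* hcat C D = 0" using c0 d0 vm_hcat by blast
      then show False using rank_full_left_ker[OF assms(2)] y0 by blast
    next
      case False
      have CA: "C ** A = - (D ** B)" using assms(3) by (simp add: eq_neg_iff_add_eq_0)
      have l1: "u v* (A - sm w B) = u v* A - w *s (u v* B)"
        by (simp only: vector_matrix_mult_diff_rdistrib vm_smult)
      have l2: "u v* A = y v* (C ** A)" unfolding u_def by (rule vector_matrix_mul_assoc)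
      have l3: "y v* (C ** A) = - (y v* (D ** B))" unfolding CA by (rule vm_neg)
      have l4: "y v* (D ** B) = (y v* D) v* B" by (simp only: vector_matrix_mul_assoc)
      have l5: "((-w) *s u) v* B = (-w) *s (u v* B)" by (rule vm_scal_left)
      have "u v* (A - sm w B) = - ((-w) *s (u v* B)) - w *s (u v* B)"
        using l1 l2 l3 l4 l5 yD by simp
      also have "\<dots> = 0" by (simp add: vec_eq_iff)
      finally have "u v* (A - sm w B) = 0" .
      then show False using w False det0_left_ker by blast
    qed
  qed
  then show ?thesis unfolding regular_pair_def sm_def[symmetric] by blast
qed

end
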